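(* For every $k\ge1$ and every $g\in B_k$, we have $g^2\in B_k'$.
   Context: Let $C_2=\{e,\sigma\}$ with $\sigma=(1,2)$. Define $B_1=C_2$ and $B_k=B_{k-1}\wr C_2$ for $k>1$ (the iterated permutational wreath product of $k$ copies of $C_2$, isomorphic to a Sylow $2$-subgroup of $S_{2^k}$), with elements written as wreath recursions $(g_1,g_2)\pi$, $g_1,g_2\in B_{k-1}$, $\pi\in C_2$, and multiplication $(g_1,g_2)\pi\cdot(h_1,h_2)\rho=(g_1h_{\pi(1)},g_2h_{\pi(2)})\pi\rho$. *)

theory Defs
  imports "HOL-Algebra.Algebra"
begin

text \<open>Elements of the iterated wreath product are represented by wreath recursions:
  a binary tree whose inner nodes are labelled by an element of C_2
  (False = identity e, True = the transposition sigma = (1 2)).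
  Wr g1 g2 p stands for (g1,g2)pi, where pi = sigma iff p.\<close>

datatype wr = WLeaf | Wr wr wr bool

text \<open>B_0 is the trivial group; B_k = B_(k-1) wr C_2, so B_1 = C_2.\<close>
fun wr_set :: "nat \<Rightarrow> wr set" where
  "wr_set 0 = {WLeaf}"
| "wr_set (Suc k) = {Wr g1 g2 p | g1 g2 p. g1 \<in> wr_set k \<and> g2 \<in> wr_set k}"

fun wr_one :: "nat \<Rightarrow> wr" where
  "wr_one 0 = WLeaf"
| "wr_one (Suc k) = Wr (wr_one k) (wr_one k) False"

text \<open>(g1,g2)pi * (h1,h2)rho = (g1 h_pi(1), g2 h_pi(2)) pi rho.\<close>
fun wr_mult :: "wr \<Rightarrow> wr \<Rightarrow> wr" where
  "wr_mult (Wr g1 g2 p) (Wr h1 h2 q) =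
     Wr (wr_mult g1 (if p then h2 else h1)) (wr_mult g2 (if p then h1 else h2)) (p \<noteq> q)"
| "wr_mult _ _ = WLeaf"

definition B :: "nat \<Rightarrow> wr monoid" where
  "B k = \<lparr>carrier = wr_set k, monoid.mult = wr_mult, one = wr_one k\<rparr>"

end

theory Submission
  imports Defs
begin

fun wr_inv :: "wr \<Rightarrow> wr" where
  "wr_inv (Wr g1 g2 p) = Wr (wr_inv (if p then g2 else g1)) (wr_inv (if p then g1 else g2)) p"
| "wr_inv WLeaf = WLeaf"

lemma wr_set_Suc_E:
  assumes "x \<in> wr_set (Suc k)"
  obtains g1 g2 p where "x = Wr g1 g2 p" "g1 \<in> wr_set k" "g2 \<in> wr_set k"
  using assms by auto

lemma wr_closed: "x \<in> wr_set k \<Longrightarrow> y \<in> wr_set k \<Longrightarrow> wr_mult x y \<in> wr_set k"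
proof (induction k arbitrary: x y)
  case 0 then show ?case by simp
next
  case (Suc k)
  from Suc.prems show ?case by (auto simp: Suc.IH)
qed

lemma wr_one_in: "wr_one k \<in> wr_set k"
  by (induction k) auto

lemma wr_inv_in: "x \<in> wr_set k \<Longrightarrow> wr_inv x \<in> wr_set k"
  by (induction k arbitrary: x) auto

lemma wr_assoc: "x \<in> wr_set k \<Longrightarrow> y \<in> wr_set k \<Longrightarrow> z \<in> wr_set k \<Longrightarrow>
   wr_mult (wr_mult x y) z = wr_mult x (wr_mult y z)"
proof (induction k arbitrary: x y z)
  case 0 then show ?case by simp
next
  case (Suc k)
  from Suc.prems show ?case by (auto simp: Suc.IH)
qed

lemma wr_lone: "x \<in> wr_set k \<Longrightarrow> wr_mult (wr_one k) x = x"
  by (induction k arbitrary: x) auto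

lemma wr_rone: "x \<in> wr_set k \<Longrightarrow> wr_mult x (wr_one k) = x"
  by (induction k arbitrary: x) auto

lemma wr_linv: "x \<in> wr_set k \<Longrightarrow> wr_mult (wr_inv x) x = wr_one k"
  by (induction k arbitrary: x) auto

lemma wr_inv_one: "wr_inv (wr_one k) = wr_one k"
  by (induction k) auto

lemma carrier_B[simp]: "carrier (B k) = wr_set k"
  and mult_B[simp]: "x \<otimes>\<^bsub>B k\<^esub> y = wr_mult x y"
  and one_B[simp]: "\<one>\<^bsub>B k\<^esub> = wr_one k"
  by (simp_all add: B_def)

lemma group_B: "group (B k)"
  apply (rule groupI)
  apply (auto simp: wr_closed wr_one_in wr_assoc wr_lone)
  using wr_inv_in wr_linv by blast

lemma inv_B[simp]: "x \<in> wr_set k \<Longrightarrow> inv\<^bsub>B k\<^esub> x = wr_inv x"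
proof -
  assume x: "x \<in> wr_set k"
  interpret group "B k" by (rule group_B)
  show ?thesis by (rule inv_equality) (simp_all add: x wr_linv wr_inv_in)
qed

abbreviation D where "D k \<equiv> derived (B k) (carrier (B k))"

lemma D_sub: "subgroup (D k) (B k)"
  using group.derived_is_subgroup[OF group_B] by simp

lemma D_mult: "a \<in> D k \<Longrightarrow> b \<in> D k \<Longrightarrow> wr_mult a b \<in> D k"
  using subgroup.m_closed[OF D_sub] by fastforce

lemma D_carr: "a \<in> D k \<Longrightarrow> a \<in> wr_set k"
  using subgroup.subset[OF D_sub] by fastforce

lemma DS_comm: "a \<in> wr_set k \<Longrightarrow> b \<in> wr_set k \<Longrightarrow>
   wr_mult (wr_mult (wr_mult a b) (wr_inv a)) (wr_inv b) \<in> derived_set (B k) (carrier (B k))"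
  apply (rule UN_I[of a], simp)
  apply (rule UN_I[of b], simp)
  by (simp add: wr_inv_in)

lemma D_comm: "a \<in> wr_set k \<Longrightarrow> b \<in> wr_set k \<Longrightarrow>
   wr_mult (wr_mult (wr_mult a b) (wr_inv a)) (wr_inv b) \<in> D k"
  unfolding derived_def by (rule generate.incl) (rule DS_comm)

lemma L_D:
  assumes "x \<in> D k"
  shows "Wr x (wr_one k) False \<in> D (Suc k)"
  using assms unfolding derived_def
proof (induction x rule: generate.induct)
  case one
  then show ?case using generate.one[of "B (Suc k)"] by simp
next
  case (incl h)
  then obtain a b where ab: "a \<in> wr_set k" "b \<in> wr_set k"
    "h = wr_mult (wr_mult (wr_mult a b) (wr_inv a)) (wr_inv b)" by auto
  let ?a = "Wr a (wr_one k) False" and ?b = "Wr b (wr_one k) False"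
  have "?a \<in> wr_set (Suc k)" "?b \<in> wr_set (Suc k)" using ab wr_one_in by auto
  then have "wr_mult (wr_mult (wr_mult ?a ?b) (wr_inv ?a)) (wr_inv ?b) \<in> D (Suc k)"
    by (rule D_comm)
  then show ?case using ab by (simp add: wr_inv_one wr_lone wr_one_in derived_def)
next
  case (inv h)
  then obtain a b where ab: "a \<in> wr_set k" "b \<in> wr_set k"
    "h = wr_mult (wr_mult (wr_mult a b) (wr_inv a)) (wr_inv b)" by auto
  have hc: "h \<in> wr_set k" using ab by (simp add: wr_closed wr_inv_in)
  let ?a = "Wr a (wr_one k) False" and ?b = "Wr b (wr_one k) False"
  have "?a \<in> wr_set (Suc k)" "?b \<in> wr_set (Suc k)" using ab wr_one_in by auto
  then have "wr_mult (wr_mult (wr_mult ?a ?b) (wr_inv ?a)) (wr_inv ?b)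
      \<in> derived_set (B (Suc k)) (carrier (B (Suc k)))" by (rule DS_comm)
  then have "inv\<^bsub>B (Suc k)\<^esub> (wr_mult (wr_mult (wr_mult ?a ?b) (wr_inv ?a)) (wr_inv ?b)) \<in> D (Suc k)"
    unfolding derived_def by (rule generate.inv)
  moreover have "wr_mult (wr_mult (wr_mult ?a ?b) (wr_inv ?a)) (wr_inv ?b) = Wr h (wr_one k) False"
    using ab by (simp add: wr_inv_one wr_lone wr_one_in)
  moreover have "inv\<^bsub>B (Suc k)\<^esub> (Wr h (wr_one k) False) = Wr (wr_inv h) (wr_one k) False"
    using hc wr_one_in by (subst inv_B) (auto simp add: wr_inv_one)
  ultimately show ?case unfolding derived_def using inv_B[OF hc] by simp
next
  case (eng h1 h2)
  have "wr_mult (Wr h1 (wr_one k) False) (Wr h2 (wr_one k) False) \<in> D (Suc k)"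
    using eng D_mult unfolding derived_def by blast
  then show ?case by (simp add: wr_lone wr_one_in derived_def)
qed


lemma R_D:
  assumes "x \<in> D k"
  shows "Wr (wr_one k) x False \<in> D (Suc k)"
  using assms unfolding derived_def
proof (induction x rule: generate.induct)
  case one
  then show ?case using generate.one[of "B (Suc k)"] by simp
next
  case (incl h)
  then obtain a b where ab: "a \<in> wr_set k" "b \<in> wr_set k"
    "h = wr_mult (wr_mult (wr_mult a b) (wr_inv a)) (wr_inv b)" by auto
  let ?a = "Wr (wr_one k) a False" and ?b = "Wr (wr_one k) b False"
  have "?a \<in> wr_set (Suc k)" "?b \<in> wr_set (Suc k)" using ab wr_one_in by auto
  then have "wr_mult (wr_mult (wr_mult ?a ?b) (wr_inv ?a)) (wr_inv ?b) \<in> D (Suc k)"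
    by (rule D_comm)
  then show ?case using ab by (simp add: wr_inv_one wr_lone wr_one_in derived_def)
next
  case (inv h)
  then obtain a b where ab: "a \<in> wr_set k" "b \<in> wr_set k"
    "h = wr_mult (wr_mult (wr_mult a b) (wr_inv a)) (wr_inv b)" by auto
  have hc: "h \<in> wr_set k" using ab by (simp add: wr_closed wr_inv_in)
  let ?a = "Wr (wr_one k) a False" and ?b = "Wr (wr_one k) b False"
  have "?a \<in> wr_set (Suc k)" "?b \<in> wr_set (Suc k)" using ab wr_one_in by auto
  then have "wr_mult (wr_mult (wr_mult ?a ?b) (wr_inv ?a)) (wr_inv ?b)
      \<in> derived_set (B (Suc k)) (carrier (B (Suc k)))" by (rule DS_comm)
  then have "inv\<^bsub>B (Suc k)\<^esub> (wr_mult (wr_mult (wr_mult ?a ?b) (wr_inv ?a)) (wr_inv ?b)) \<in> D (Suc k)"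
    unfolding derived_def by (rule generate.inv)
  moreover have "wr_mult (wr_mult (wr_mult ?a ?b) (wr_inv ?a)) (wr_inv ?b) = Wr (wr_one k) h False"
    using ab by (simp add: wr_inv_one wr_lone wr_one_in)
  moreover have "inv\<^bsub>B (Suc k)\<^esub> (Wr (wr_one k) h False) = Wr (wr_one k) (wr_inv h) False"
    using hc wr_one_in by (subst inv_B) (auto simp add: wr_inv_one)
  ultimately show ?case unfolding derived_def using inv_B[OF hc] by simp
next
  case (eng h1 h2)
  have "wr_mult (Wr (wr_one k) h1 False) (Wr (wr_one k) h2 False) \<in> D (Suc k)"
    using eng D_mult unfolding derived_def by blast
  then show ?case by (simp add: wr_lone wr_one_in derived_def)
qed


lemma (in group) cl1: "x \<in> carrier G \<Longrightarrow> y \<in> carrier G \<Longrightarrow> inv x \<otimes> (x \<otimes> y) = y"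
  by (simp flip: m_assoc)

lemma (in group) cl2: "x \<in> carrier G \<Longrightarrow> y \<in> carrier G \<Longrightarrow> x \<otimes> (inv x \<otimes> y) = y"
  by (simp flip: m_assoc)

lemma (in group) alg: "a \<in> carrier G \<Longrightarrow> b \<in> carrier G \<Longrightarrow>
  inv (a \<otimes> b) \<otimes> ((a \<otimes> b) \<otimes> (a \<otimes> b) \<otimes> (inv b \<otimes> inv a \<otimes> b \<otimes> a)) = b \<otimes> a"
  by (simp add: m_assoc inv_mult_group cl1 cl2)

lemma wr_inv_inv: "x \<in> wr_set k \<Longrightarrow> wr_inv (wr_inv x) = x"
  by (induction k arbitrary: x) auto

lemma sq_D: "g \<in> wr_set k \<Longrightarrow> wr_mult g g \<in> D k"
proof (induction k arbitrary: g)
  case 0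
  then have "wr_mult g g = wr_one 0" by simp
  then show ?case unfolding derived_def using generate.one[of "B 0"] by simp
next
  case (Suc k)
  then obtain g1 g2 p where g: "g = Wr g1 g2 p" "g1 \<in> wr_set k" "g2 \<in> wr_set k" by auto
  show ?case
  proof (cases p)
    case False
    have "wr_mult g g = wr_mult (Wr (wr_mult g1 g1) (wr_one k) False) (Wr (wr_one k) (wr_mult g2 g2) False)"
      using g False by (simp add: wr_lone wr_rone wr_closed)
    then show ?thesis using D_mult L_D R_D Suc.IH g by metis
  next
    case True
    define h where "h = wr_mult g1 g2"
    define c where "c = wr_mult (wr_mult h h) (wr_mult (wr_mult (wr_mult (wr_inv g2) (wr_inv g1)) (wr_inv (wr_inv g2))) (wr_inv (wr_inv g1)))"
    have hc: "h \<in> wr_set k" using g by (simp add: h_def wr_closed)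
    have cD: "c \<in> D k" unfolding c_def
      by (rule D_mult[OF Suc.IH[OF hc] D_comm]) (simp_all add: g wr_inv_in)
    interpret G: group "B k" by (rule group_B)
    have i1: "wr_inv g1 = inv\<^bsub>B k\<^esub> g1" "wr_inv g2 = inv\<^bsub>B k\<^esub> g2" "wr_inv h = inv\<^bsub>B k\<^esub> h"
      using g hc by simp_all
    have eq2: "wr_mult (wr_inv h) c = wr_mult g2 g1"
      unfolding c_def using g hc
      using G.alg[of g1 g2] by (simp add: wr_inv_inv h_def wr_closed wr_inv_in)
    have t: "wr_mult (wr_mult (wr_mult (Wr h (wr_one k) False) (Wr (wr_one k) (wr_one k) True))
       (wr_inv (Wr h (wr_one k) False))) (wr_inv (Wr (wr_one k) (wr_one k) True)) \<in> D (Suc k)"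
      by (rule D_comm) (auto simp: hc wr_one_in)
    have "wr_mult (wr_mult (wr_mult (Wr h (wr_one k) False) (Wr (wr_one k) (wr_one k) True))
       (wr_inv (Wr h (wr_one k) False))) (wr_inv (Wr (wr_one k) (wr_one k) True)) = Wr h (wr_inv h) False"
      using hc by (simp add: wr_inv_one wr_lone wr_rone wr_one_in wr_inv_in)
    with t have tD: "Wr h (wr_inv h) False \<in> D (Suc k)" by simp
    have "wr_mult g g = wr_mult (Wr h (wr_inv h) False) (Wr (wr_one k) c False)"
      using g True hc eq2 D_carr[OF cD] by (simp add: h_def wr_rone)
    then show ?thesis using D_mult[OF tD R_D[OF cD]] by simp
  qed
qed

theorem mainTheorem15:
  fixes k :: nat and g :: wr
  assumes "k \<ge> 1" and "g \<in> carrier (B k)"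
  shows "g \<otimes>\<^bsub>B k\<^esub> g \<in> derived (B k) (carrier (B k))"
  using sq_D assms(2) by simp

end
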